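(* Let $A>0$ and let $c:[0,1]\times S^1\to\mathbb R^2$ be a smooth path in $\mathrm{Imm}(S^1,\mathbb R^2)$ and $L>0$ such that for all $t,\theta$: $|c_\theta(t,\theta)|=\ell(t)/2\pi$ where $\ell(t)=\ell(c(t,\cdot))$; $\langle c_t,c_\theta\rangle(t,0)=0$; and $\int_{S^1}(1+A\kappa_{c(t)}^2)\langle c_t,ic_\theta\rangle^2\,d\theta/|c_\theta|=L^2$. Let $\ell_{\max}=\max_t\ell(t)$, $\ell_{\min}=\min_t\ell(t)$. Then $$|c(t_1,\theta_1)-c(t_2,\theta_2)|\le\frac{\ell_{\max}}{2\pi}|\theta_1-\theta_2|+7\big(\ell_{\max}^{3/4}A^{-1/4}+\ell_{\max}^{1/4}\big)\sqrt{L|t_1-t_2|}$$ whenever $|t_1-t_2|\le\min(2\sqrt{A\ell_{\min}},\ell_{\min}^{3/2})/(8L)$.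
   Context: $S^1=\mathbb R/2\pi\mathbb Z$ (with $|\theta_1-\theta_2|$ the distance of representatives in $[0,2\pi]$), $\mathbb R^2\cong\mathbb C$. $\mathrm{Imm}(S^1,\mathbb R^2)$ is the space of smooth immersions; a smooth path is a jointly smooth map $c(t,\theta)$ with each $c(t,\cdot)$ an immersion. $\ell(c)=\int_{S^1}|c_\theta|d\theta$, $\kappa_c=\det(c_\theta,c_{\theta\theta})/|c_\theta|^3$. *)

theory Defs
  imports "HOL-Analysis.Analysis"
begin

fun Ck_on :: "nat \<Rightarrow> (real \<times> real) set \<Rightarrow> (real \<times> real \<Rightarrow> 'a::real_normed_vector) \<Rightarrow> bool" where
  "Ck_on 0 S f = continuous_on S f"
| "Ck_on (Suc k) S f =
     (\<exists>D. (\<forall>x\<in>S. (f has_derivative D x) (at x within S))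
          \<and> Ck_on k S (\<lambda>x. D x (1, 0)) \<and> Ck_on k S (\<lambda>x. D x (0, 1)))"

definition smooth2_on :: "(real \<times> real) set \<Rightarrow> (real \<times> real \<Rightarrow> 'a::real_normed_vector) \<Rightarrow> bool" where
  "smooth2_on S f \<longleftrightarrow> (\<forall>k. Ck_on k S f)"

text \<open>A path c(t,theta), t in [0,1], theta in R with 2pi-periodicity (i.e. theta in S^1).\<close>
definition d_theta :: "(real \<Rightarrow> real \<Rightarrow> complex) \<Rightarrow> real \<Rightarrow> real \<Rightarrow> complex" where
  "d_theta c t \<theta> = vector_derivative (\<lambda>s. c t s) (at \<theta>)"

definition d_t :: "(real \<Rightarrow> real \<Rightarrow> complex) \<Rightarrow> real \<Rightarrow> real \<Rightarrow> complex" where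
  "d_t c t \<theta> = vector_derivative (\<lambda>s. c s \<theta>) (at t within {0..1})"

definition smooth_imm_path :: "(real \<Rightarrow> real \<Rightarrow> complex) \<Rightarrow> bool" where
  "smooth_imm_path c \<longleftrightarrow>
     smooth2_on ({0..1} \<times> UNIV) (\<lambda>(t, \<theta>). c t \<theta>)
     \<and> (\<forall>t\<in>{0..1}. \<forall>\<theta>. c t (\<theta> + 2 * pi) = c t \<theta>)
     \<and> (\<forall>t\<in>{0..1}. \<forall>\<theta>. d_theta c t \<theta> \<noteq> 0)"

definition curve_length :: "(real \<Rightarrow> real \<Rightarrow> complex) \<Rightarrow> real \<Rightarrow> real" where
  "curve_length c t = integral {0..2 * pi} (\<lambda>\<theta>. norm (d_theta c t \<theta>))"

text \<open>curvature det(c_theta, c_theta theta)/|c_theta|^3; det(a,b) = Im(cnj a * b)\<close>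
definition curvature :: "(real \<Rightarrow> real \<Rightarrow> complex) \<Rightarrow> real \<Rightarrow> real \<Rightarrow> real" where
  "curvature c t \<theta> =
     Im (cnj (d_theta c t \<theta>) * vector_derivative (\<lambda>s. d_theta c t s) (at \<theta>))
     / norm (d_theta c t \<theta>) ^ 3"

end

theory Submission
  imports Defs
begin
lemma Ck_on_Suc_imp: "Ck_on (Suc k) S f \<Longrightarrow> Ck_on k S f"
proof (induction k arbitrary: f)
  case 0
  have "\<exists>D. (\<forall>x\<in>S. (f has_derivative D x) (at x within S)) \<and> Ck_on 0 S (\<lambda>x. D x (1,0)) \<and> Ck_on 0 S (\<lambda>x. D x (0,1))"
    using 0 by (simp only: Ck_on.simps(2))
  then obtain D where D: "\<forall>x\<in>S. (f has_derivative D x) (at x within S)" by blast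
  have "continuous_on S f" unfolding continuous_on_eq_continuous_within
    using D has_derivative_continuous by blast
  then show ?case by (simp only: Ck_on.simps(1))
next
  case (Suc k)
  have "\<exists>D. (\<forall>x\<in>S. (f has_derivative D x) (at x within S)) \<and> Ck_on (Suc k) S (\<lambda>x. D x (1,0)) \<and> Ck_on (Suc k) S (\<lambda>x. D x (0,1))"
    using Suc.prems by (simp only: Ck_on.simps(2))
  then obtain D where "\<forall>x\<in>S. (f has_derivative D x) (at x within S)" "Ck_on (Suc k) S (\<lambda>x. D x (1,0))" "Ck_on (Suc k) S (\<lambda>x. D x (0,1))" by blast
  then have "\<exists>D. (\<forall>x\<in>S. (f has_derivative D x) (at x within S)) \<and> Ck_on k S (\<lambda>x. D x (1,0)) \<and> Ck_on k S (\<lambda>x. D x (0,1))"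
    using Suc.IH by blast
  then show ?case by (simp only: Ck_on.simps(2))
qed

lemma line_derivs:
  fixes G :: "real \<times> real \<Rightarrow> 'a::real_normed_vector"
  assumes der: "\<And>p. p \<in> {0..1} \<times> UNIV \<Longrightarrow> (G has_derivative Dg p) (at p within {0..1} \<times> UNIV)"
    and t: "t \<in> {0..1}"
  shows "((\<lambda>s. G (t,s)) has_vector_derivative Dg (t,\<theta>) (0,1)) (at \<theta>)"
    and "((\<lambda>s. G (s,\<theta>)) has_vector_derivative Dg (t,\<theta>) (1,0)) (at t within {0..1})"
proof -
  have d: "(G has_derivative Dg (t,\<theta>)) (at (t,\<theta>) within {0..1} \<times> UNIV)" using der t by auto
  have lin: "linear (Dg (t,\<theta>))" by (rule has_derivative_linear[OF d])
  have p1: "((\<lambda>s. (t,s)) has_derivative (\<lambda>h. (0,h))) (at \<theta>)"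
    by (rule has_derivative_Pair[OF has_derivative_const has_derivative_ident])
  have "(G has_derivative Dg (t,\<theta>)) (at ((\<lambda>s. (t,s)) \<theta>) within (\<lambda>s. (t,s)) ` UNIV)"
    using d t by (intro has_derivative_subset[OF d]) auto
  from diff_chain_within[OF p1 this]
  have hd: "((\<lambda>s. G (t,s)) has_derivative (\<lambda>h. Dg (t,\<theta>) (0,h))) (at \<theta>)" by (simp add: o_def)
  have ee: "(\<lambda>h. Dg (t,\<theta>) (0,h)) = (\<lambda>h. h *\<^sub>R Dg (t,\<theta>) (0,1))"
  proof (rule ext)
    fix h
    have e: "(0::real,h) = h *\<^sub>R (0,1)" by simp
    show "Dg (t,\<theta>) (0,h) = h *\<^sub>R Dg (t,\<theta>) (0,1)" by (subst e) (rule linear_scale[OF lin])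
  qed
  show "((\<lambda>s. G (t,s)) has_vector_derivative Dg (t,\<theta>) (0,1)) (at \<theta>)"
    unfolding has_vector_derivative_def by (rule has_derivative_eq_rhs[OF hd ee])
  have p2: "((\<lambda>s. (s,\<theta>)) has_derivative (\<lambda>h. (h,0))) (at t within {0..1})"
    by (rule has_derivative_Pair[OF has_derivative_ident has_derivative_const])
  have "(G has_derivative Dg (t,\<theta>)) (at ((\<lambda>s. (s,\<theta>)) t) within (\<lambda>s. (s,\<theta>)) ` {0..1})"
    using d t by (intro has_derivative_subset[OF d]) auto
  from diff_chain_within[OF p2 this]
  have hd2: "((\<lambda>s. G (s,\<theta>)) has_derivative (\<lambda>h. Dg (t,\<theta>) (h,0))) (at t within {0..1})" by (simp add: o_def)
  have ee2: "(\<lambda>h. Dg (t,\<theta>) (h,0)) = (\<lambda>h. h *\<^sub>R Dg (t,\<theta>) (1,0))"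
  proof (rule ext)
    fix h
    have e: "(h,0::real) = h *\<^sub>R (1,0)" by simp
    show "Dg (t,\<theta>) (h,0) = h *\<^sub>R Dg (t,\<theta>) (1,0)" by (subst e) (rule linear_scale[OF lin])
  qed
  show "((\<lambda>s. G (s,\<theta>)) has_vector_derivative Dg (t,\<theta>) (1,0)) (at t within {0..1})"
    unfolding has_vector_derivative_def by (rule has_derivative_eq_rhs[OF hd2 ee2])
qed

lemma cont_line_th:
  fixes g :: "real \<times> real \<Rightarrow> 'a::topological_space"
  assumes "continuous_on ({0..1} \<times> UNIV) g" "t \<in> {0..1}"
  shows "continuous_on T (\<lambda>\<theta>. g (t,\<theta>))"
  by (rule continuous_on_compose2[OF assms(1) continuous_on_Pair[OF continuous_on_const continuous_on_id]])
     (use assms(2) in auto)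

lemma cont_line_t:
  fixes g :: "real \<times> real \<Rightarrow> 'a::topological_space"
  assumes "continuous_on ({0..1} \<times> UNIV) g" "T \<subseteq> {0..1}"
  shows "continuous_on T (\<lambda>s. g (s,\<theta>))"
  by (rule continuous_on_compose2[OF assms(1) continuous_on_Pair[OF continuous_on_id continuous_on_const]])
     (use assms(2) in auto)

lemma int_amgm:
  fixes f g :: "real \<Rightarrow> real"
  assumes cf: "continuous_on {a..b} f" and cg: "continuous_on {a..b} g" and e: "e > 0"
  shows "integral {a..b} (\<lambda>x. \<bar>f x * g x\<bar>) \<le> (e * integral {a..b} (\<lambda>x. (f x)\<^sup>2) + integral {a..b} (\<lambda>x. (g x)\<^sup>2) / e) / 2"
proof -
  have pt: "\<bar>f x * g x\<bar> \<le> (e * (f x)\<^sup>2 + (g x)\<^sup>2 / e) / 2" for x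
  proof -
    have h: "(e*\<bar>f x\<bar> - \<bar>g x\<bar>)\<^sup>2 \<ge> 0" by simp
    have "(e*\<bar>f x\<bar> - \<bar>g x\<bar>)\<^sup>2 = e\<^sup>2*(f x)\<^sup>2 - 2*e*\<bar>f x * g x\<bar> + (g x)\<^sup>2"
      by (simp add: power2_diff power_mult_distrib abs_mult)
    with h have h2: "2*e*\<bar>f x * g x\<bar> \<le> e\<^sup>2*(f x)\<^sup>2 + (g x)\<^sup>2" by linarith
    have "(e * (f x)\<^sup>2 + (g x)\<^sup>2 / e) / 2 = (e\<^sup>2*(f x)\<^sup>2 + (g x)\<^sup>2) / (2*e)"
      using e by (simp add: field_simps power2_eq_square)
    also have "\<dots> \<ge> (2*e*\<bar>f x * g x\<bar>) / (2*e)"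
      using h2 e by (intro divide_right_mono) auto
    finally show ?thesis using e by simp
  qed
  have i1: "(\<lambda>x. (f x)\<^sup>2) integrable_on {a..b}"
    by (intro integrable_continuous_interval continuous_intros cf)
  have i2: "(\<lambda>x. (g x)\<^sup>2) integrable_on {a..b}"
    by (intro integrable_continuous_interval continuous_intros cg)
  have hi: "((\<lambda>x. (e * (f x)\<^sup>2 + (g x)\<^sup>2 / e) / 2) has_integral
      ((e * integral {a..b} (\<lambda>x. (f x)\<^sup>2) + integral {a..b} (\<lambda>x. (g x)\<^sup>2) / e) / 2)) {a..b}"
    by (intro has_integral_divide has_integral_add has_integral_mult_right i1[unfolded has_integral_integral] i2[unfolded has_integral_integral])
  have "integral {a..b} (\<lambda>x. \<bar>f x * g x\<bar>) \<le> integral {a..b} (\<lambda>x. (e * (f x)\<^sup>2 + (g x)\<^sup>2 / e) / 2)"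
  proof (rule integral_le)
    show "(\<lambda>x. \<bar>f x * g x\<bar>) integrable_on {a..b}"
      by (intro integrable_continuous_interval continuous_intros cf cg)
    show "(\<lambda>x. (e * (f x)\<^sup>2 + (g x)\<^sup>2 / e) / 2) integrable_on {a..b}" using hi by blast
    show "\<And>x. x \<in> {a..b} \<Longrightarrow> \<bar>f x * g x\<bar> \<le> (e * (f x)\<^sup>2 + (g x)\<^sup>2 / e) / 2" using pt by blast
  qed
  also have "\<dots> = (e * integral {a..b} (\<lambda>x. (f x)\<^sup>2) + integral {a..b} (\<lambda>x. (g x)\<^sup>2) / e) / 2"
    by (rule integral_unique[OF hi])
  finally show ?thesis .
qed

lemma int_cs:
  fixes f g :: "real \<Rightarrow> real"
  assumes cf: "continuous_on {a..b} f" and cg: "continuous_on {a..b} g"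
    and F: "integral {a..b} (\<lambda>x. (f x)\<^sup>2) \<le> FF" and G: "integral {a..b} (\<lambda>x. (g x)\<^sup>2) \<le> GG"
    and FF: "FF > 0" and GG: "GG > 0"
  shows "integral {a..b} (\<lambda>x. \<bar>f x * g x\<bar>) \<le> sqrt (FF * GG)"
proof -
  define e where "e = sqrt (GG / FF)"
  have e: "e > 0" using FF GG by (simp add: e_def)
  have "integral {a..b} (\<lambda>x. \<bar>f x * g x\<bar>) \<le> (e * integral {a..b} (\<lambda>x. (f x)\<^sup>2) + integral {a..b} (\<lambda>x. (g x)\<^sup>2) / e) / 2"
    by (rule int_amgm[OF cf cg e])
  also have "\<dots> \<le> (e * FF + GG / e) / 2"
    using F G e by (intro divide_right_mono add_mono mult_left_mono) (auto simp: divide_right_mono)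
  also have "e * FF = sqrt (FF * GG)"
    using FF GG by (simp add: e_def real_sqrt_divide field_simps real_sqrt_mult)
  also have "GG / e = sqrt (FF * GG)"
    using FF GG by (simp add: e_def real_sqrt_divide field_simps real_sqrt_mult)
  finally show ?thesis by simp
qed

locale cpath =
  fixes c :: "real \<Rightarrow> real \<Rightarrow> complex" and A L :: real
    and D E :: "real \<times> real \<Rightarrow> real \<times> real \<Rightarrow> complex"
  assumes A_pos: "A > 0" and L_pos: "L > 0"
    and per: "\<And>t \<theta>. t \<in> {0..1} \<Longrightarrow> c t (\<theta> + 2*pi) = c t \<theta>"
    and Dder: "\<And>p. p \<in> {0..1} \<times> UNIV \<Longrightarrow> ((\<lambda>(t,\<theta>). c t \<theta>) has_derivative D p) (at p within {0..1} \<times> UNIV)"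
    and Eder: "\<And>p. p \<in> {0..1} \<times> UNIV \<Longrightarrow> ((\<lambda>p. D p (0,1)) has_derivative E p) (at p within {0..1} \<times> UNIV)"
    and contF: "continuous_on ({0..1} \<times> UNIV) (\<lambda>(t,\<theta>). c t \<theta>)"
    and cont_t: "continuous_on ({0..1} \<times> UNIV) (\<lambda>p. D p (1,0))"
    and cont_th: "continuous_on ({0..1} \<times> UNIV) (\<lambda>p. D p (0,1))"
    and cont_tht: "continuous_on ({0..1} \<times> UNIV) (\<lambda>p. E p (1,0))"
    and cont_thth: "continuous_on ({0..1} \<times> UNIV) (\<lambda>p. E p (0,1))"
    and nz: "\<And>t \<theta>. t \<in> {0..1} \<Longrightarrow> d_theta c t \<theta> \<noteq> 0"
    and const_speed: "\<And>t \<theta>. t \<in> {0..1} \<Longrightarrow> norm (d_theta c t \<theta>) = curve_length c t / (2 * pi)"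
    and normal_at0: "\<And>t. t \<in> {0..1} \<Longrightarrow> inner (d_t c t 0) (d_theta c t 0) = 0"
    and energy: "\<And>t. t \<in> {0..1} \<Longrightarrow> integral {0..2 * pi} (\<lambda>\<theta>. (1 + A * (curvature c t \<theta>)\<^sup>2)
           * (inner (d_t c t \<theta>) (\<i> * d_theta c t \<theta>))\<^sup>2 / norm (d_theta c t \<theta>)) = L\<^sup>2"
begin

definition "ct t \<theta> = D (t,\<theta>) (1,0)"
definition "cth t \<theta> = D (t,\<theta>) (0,1)"
definition "ctht t \<theta> = E (t,\<theta>) (1,0)"
definition "cthth t \<theta> = E (t,\<theta>) (0,1)"
definition "v t = curve_length c t / (2*pi)"
definition "w t \<theta> = inner (ct t \<theta>) (\<i> * cth t \<theta>)"
definition "kap t \<theta> = curvature c t \<theta>"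

lemma F1: assumes "t \<in> {0..1}" shows "((\<lambda>s. c t s) has_vector_derivative cth t \<theta>) (at \<theta>)"
  using line_derivs(1)[OF Dder assms, of \<theta>] by (simp add: cth_def)

lemma F2: assumes "t \<in> {0..1}" shows "((\<lambda>s. c s \<theta>) has_vector_derivative ct t \<theta>) (at t within {0..1})"
  using line_derivs(2)[OF Dder assms, of \<theta>] by (simp add: ct_def)

lemma F3: assumes "t \<in> {0..1}" shows "((\<lambda>s. cth t s) has_vector_derivative cthth t \<theta>) (at \<theta>)"
  unfolding cth_def cthth_def using line_derivs(1)[OF Eder assms, of \<theta>] by simp

lemma F4: assumes "t \<in> {0..1}" shows "((\<lambda>s. cth s \<theta>) has_vector_derivative ctht t \<theta>) (at t within {0..1})"
  unfolding cth_def ctht_def using line_derivs(2)[OF Eder assms, of \<theta>] by simp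

lemma dth: assumes "t \<in> {0..1}" shows "d_theta c t \<theta> = cth t \<theta>"
  unfolding d_theta_def by (rule vector_derivative_at[OF F1[OF assms]])

lemma dt: assumes "t \<in> {0..1}" shows "d_t c t \<theta> = ct t \<theta>"
  unfolding d_t_def by (rule vector_derivative_within_closed_interval[OF _ _ F2[OF assms]]) (use assms in auto)

lemma vt: assumes "t \<in> {0..1}" shows "norm (cth t \<theta>) = v t"
  using const_speed[OF assms, of \<theta>] by (simp add: dth[OF assms] v_def)

lemma vpos: assumes "t \<in> {0..1}" shows "v t > 0"
proof -
  have "cth t 0 \<noteq> 0" using nz[OF assms, of 0] by (simp add: dth[OF assms])
  then show ?thesis using vt[OF assms, of 0] by (metis zero_less_norm_iff)
qed

lemma clen: assumes "t \<in> {0..1}" shows "curve_length c t = 2 * pi * v t"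
  by (simp add: v_def)

lemma curv: assumes "t \<in> {0..1}" shows "kap t \<theta> = Im (cnj (cth t \<theta>) * cthth t \<theta>) / (v t)^3"
proof -
  have e: "(\<lambda>s. d_theta c t s) = (\<lambda>s. cth t s)" by (rule ext) (rule dth[OF assms])
  show ?thesis unfolding kap_def curvature_def e vector_derivative_at[OF F3[OF assms]]
    by (simp add: dth[OF assms] vt[OF assms])
qed

lemma cont_c_th: assumes "t \<in> {0..1}" shows "continuous_on T (\<lambda>\<theta>. c t \<theta>)"
  using cont_line_th[OF contF assms, of T] by simp
lemma cont_ct_th: assumes "t \<in> {0..1}" shows "continuous_on T (\<lambda>\<theta>. ct t \<theta>)"
  unfolding ct_def by (rule cont_line_th[OF cont_t assms])
lemma cont_cth_th: assumes "t \<in> {0..1}" shows "continuous_on T (\<lambda>\<theta>. cth t \<theta>)"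
  unfolding cth_def by (rule cont_line_th[OF cont_th assms])
lemma cont_ctht_th: assumes "t \<in> {0..1}" shows "continuous_on T (\<lambda>\<theta>. ctht t \<theta>)"
  unfolding ctht_def by (rule cont_line_th[OF cont_tht assms])
lemma cont_cthth_th: assumes "t \<in> {0..1}" shows "continuous_on T (\<lambda>\<theta>. cthth t \<theta>)"
  unfolding cthth_def by (rule cont_line_th[OF cont_thth assms])
lemma cont_w: assumes "t \<in> {0..1}" shows "continuous_on T (\<lambda>\<theta>. w t \<theta>)"
  unfolding w_def by (intro continuous_intros cont_ct_th[OF assms] cont_cth_th[OF assms])
lemma cont_kap: assumes "t \<in> {0..1}" shows "continuous_on T (\<lambda>\<theta>. kap t \<theta>)"
proof -
  have e: "(\<lambda>\<theta>. kap t \<theta>) = (\<lambda>\<theta>. Im (cnj (cth t \<theta>) * cthth t \<theta>) / (v t)^3)"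
    by (rule ext) (rule curv[OF assms])
  show ?thesis unfolding e
    by (intro continuous_intros cont_cthth_th[OF assms] cont_cth_th[OF assms]) (use vpos[OF assms] in auto)
qed

lemma en1: assumes t: "t \<in> {0..1}"
  shows "integral {0..2*pi} (\<lambda>\<theta>. (1 + A * (kap t \<theta>)\<^sup>2) * (w t \<theta>)\<^sup>2) = v t * L\<^sup>2"
proof -
  let ?f = "\<lambda>\<theta>. (1 + A * (kap t \<theta>)\<^sup>2) * (w t \<theta>)\<^sup>2"
  have int: "?f integrable_on {0..2*pi}"
    by (intro integrable_continuous_interval continuous_intros cont_kap[OF t] cont_w[OF t])
  have e: "(\<lambda>\<theta>. (1 + A * (curvature c t \<theta>)\<^sup>2)
           * (inner (d_t c t \<theta>) (\<i> * d_theta c t \<theta>))\<^sup>2 / norm (d_theta c t \<theta>)) = (\<lambda>\<theta>. ?f \<theta> / v t)"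
    by (rule ext) (simp add: dt[OF t] dth[OF t] vt[OF t] kap_def w_def)
  have "integral {0..2*pi} (\<lambda>\<theta>. ?f \<theta> / v t) = integral {0..2*pi} ?f / v t"
    by (rule integral_unique[OF has_integral_divide[OF int[unfolded has_integral_integral]]])
  with energy[OF t] e have "integral {0..2*pi} ?f / v t = L\<^sup>2" by simp
  then show ?thesis using vpos[OF t] by (simp add: field_simps)
qed

lemma en_w: assumes t: "t \<in> {0..1}"
  shows "integral {0..2*pi} (\<lambda>\<theta>. (w t \<theta>)\<^sup>2) \<le> v t * L\<^sup>2"
proof -
  have "integral {0..2*pi} (\<lambda>\<theta>. (w t \<theta>)\<^sup>2) \<le> integral {0..2*pi} (\<lambda>\<theta>. (1 + A * (kap t \<theta>)\<^sup>2) * (w t \<theta>)\<^sup>2)"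
  proof (rule integral_le)
    show "(\<lambda>\<theta>. (w t \<theta>)\<^sup>2) integrable_on {0..2*pi}"
      by (intro integrable_continuous_interval continuous_intros cont_w[OF t])
    show "(\<lambda>\<theta>. (1 + A * (kap t \<theta>)\<^sup>2) * (w t \<theta>)\<^sup>2) integrable_on {0..2*pi}"
      by (intro integrable_continuous_interval continuous_intros cont_kap[OF t] cont_w[OF t])
    fix \<theta>
    have "0 \<le> A * (kap t \<theta>)\<^sup>2 * (w t \<theta>)\<^sup>2" using A_pos by simp
    then show "(w t \<theta>)\<^sup>2 \<le> (1 + A * (kap t \<theta>)\<^sup>2) * (w t \<theta>)\<^sup>2" by (simp add: algebra_simps)
  qed
  then show ?thesis using en1[OF t] by simp
qed

lemma en_kw: assumes t: "t \<in> {0..1}"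
  shows "integral {0..2*pi} (\<lambda>\<theta>. (kap t \<theta> * w t \<theta>)\<^sup>2) \<le> v t * L\<^sup>2 / A"
proof -
  have int: "(\<lambda>\<theta>. (kap t \<theta> * w t \<theta>)\<^sup>2) integrable_on {0..2*pi}"
    by (intro integrable_continuous_interval continuous_intros cont_kap[OF t] cont_w[OF t])
  have "integral {0..2*pi} (\<lambda>\<theta>. A * (kap t \<theta> * w t \<theta>)\<^sup>2) \<le> integral {0..2*pi} (\<lambda>\<theta>. (1 + A * (kap t \<theta>)\<^sup>2) * (w t \<theta>)\<^sup>2)"
  proof (rule integral_le)
    show "(\<lambda>\<theta>. A * (kap t \<theta> * w t \<theta>)\<^sup>2) integrable_on {0..2*pi}"
      by (intro integrable_continuous_interval continuous_intros cont_kap[OF t] cont_w[OF t])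
    show "(\<lambda>\<theta>. (1 + A * (kap t \<theta>)\<^sup>2) * (w t \<theta>)\<^sup>2) integrable_on {0..2*pi}"
      by (intro integrable_continuous_interval continuous_intros cont_kap[OF t] cont_w[OF t])
    fix \<theta>
    have "0 \<le> (w t \<theta>)\<^sup>2" by simp
    then show "A * (kap t \<theta> * w t \<theta>)\<^sup>2 \<le> (1 + A * (kap t \<theta>)\<^sup>2) * (w t \<theta>)\<^sup>2"
      by (simp add: algebra_simps power_mult_distrib)
  qed
  moreover have "integral {0..2*pi} (\<lambda>\<theta>. A * (kap t \<theta> * w t \<theta>)\<^sup>2) = A * integral {0..2*pi} (\<lambda>\<theta>. (kap t \<theta> * w t \<theta>)\<^sup>2)"
    by (rule integral_unique[OF has_integral_mult_right[OF int[unfolded has_integral_integral]]])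
  ultimately show ?thesis using en1[OF t] A_pos by (simp add: field_simps)
qed

end

lemma cplx_norm_split: "norm (z::complex) * norm u \<le> \<bar>inner z u\<bar> + \<bar>inner z (\<i> * u)\<bar>"
proof -
  have "norm (z * cnj u) \<le> \<bar>Re (z * cnj u)\<bar> + \<bar>Im (z * cnj u)\<bar>" by (rule cmod_le)
  moreover have "Re (z * cnj u) = inner z u" by (simp add: inner_complex_def)
  moreover have "\<bar>Im (z * cnj u)\<bar> = \<bar>inner z (\<i> * u)\<bar>" by (simp add: inner_complex_def algebra_simps)
  ultimately show ?thesis by (simp add: norm_mult)
qed

lemma cplx_ident:
  fixes z u y :: complex
  assumes perp: "inner y u = 0" and u: "u \<noteq> 0"
  shows "inner z y = (Im (cnj u * y) / (norm u)^3) * norm u * inner z (\<i> * u)"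
proof -
  have key: "inner z y * (norm u)\<^sup>2 = Im (cnj u * y) * inner z (\<i> * u) + inner y u * inner z u"
    unfolding cmod_power2 by (simp add: inner_complex_def algebra_simps power2_eq_square)
  have nu: "norm u > 0" using u by simp
  have "inner z y = Im (cnj u * y) * inner z (\<i> * u) / (norm u)\<^sup>2"
    using key perp nu by (simp add: field_simps)
  also have "\<dots> = (Im (cnj u * y) / (norm u)^3) * norm u * inner z (\<i> * u)"
    using nu by (simp add: field_simps power2_eq_square power3_eq_cube)
  finally show ?thesis .
qed

context cpath begin

definition "K t = integral {0..2*pi} (\<lambda>\<theta>. \<bar>kap t \<theta> * w t \<theta>\<bar>)"

lemma K_bound: assumes t: "t \<in> {0..1}" shows "K t \<le> sqrt (v t * L\<^sup>2 / A * (2*pi))"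
proof -
  have "integral {0..2*pi} (\<lambda>\<theta>. \<bar>kap t \<theta> * w t \<theta> * 1\<bar>) \<le> sqrt (v t * L\<^sup>2 / A * (2*pi))"
  proof (rule int_cs)
    show "continuous_on {0..2*pi} (\<lambda>\<theta>. kap t \<theta> * w t \<theta>)"
      by (intro continuous_intros cont_kap[OF t] cont_w[OF t])
    show "integral {0..2*pi} (\<lambda>\<theta>. (kap t \<theta> * w t \<theta>)\<^sup>2) \<le> v t * L\<^sup>2 / A" by (rule en_kw[OF t])
    show "integral {0..2*pi} (\<lambda>\<theta>. (1::real)\<^sup>2) \<le> 2*pi" by simp
    show "v t * L\<^sup>2 / A > 0" using vpos[OF t] L_pos A_pos by simp
    show "continuous_on {0..2*pi} (\<lambda>\<theta>. 1::real)" by (rule continuous_on_const)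
    show "0 < 2*pi" by simp
  qed
  then show ?thesis by (simp add: K_def)
qed

lemma K_nonneg: assumes t: "t \<in> {0..1}" shows "0 \<le> K t"
  unfolding K_def
  by (rule integral_nonneg, rule integrable_continuous_interval, intro continuous_intros cont_kap[OF t] cont_w[OF t]) simp

lemma ct_formula: assumes t: "t \<in> {0..1}" and th: "\<theta> \<in> {0..2*pi}"
  shows "ct t \<theta> = ct t 0 + integral {0..\<theta>} (\<lambda>u. ctht t u)"
proof -
  have th0: "0 \<le> \<theta>" using th by auto
  have Phi: "integral {0..\<theta>} (\<lambda>u. cth s u) = c s \<theta> - c s 0" if s: "s \<in> {0..1}" for s
  proof -
    have "((\<lambda>u. cth s u) has_integral (c s \<theta> - c s 0)) {0..\<theta>}"
      by (rule fundamental_theorem_of_calculus[OF th0])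
         (rule has_vector_derivative_at_within[OF F1[OF s]])
    then show ?thesis by (rule integral_unique)
  qed
  have Lb: "((\<lambda>s. integral (cbox 0 \<theta>) (\<lambda>u. cth s u)) has_vector_derivative integral (cbox 0 \<theta>) (\<lambda>u. ctht t u))
      (at t within {0..1})"
  proof (rule leibniz_rule_vector_derivative[where fx = "\<lambda>s u. ctht s u"])
    show "((\<lambda>x. cth x u) has_vector_derivative ctht x u) (at x within {0..1})"
      if "x \<in> {0..1}" "u \<in> cbox 0 \<theta>" for x u using F4[OF that(1)] .
    show "(\<lambda>u. cth x u) integrable_on cbox 0 \<theta>" if "x \<in> {0..1}" for x
      by (rule integrable_continuous) (rule cont_cth_th[OF that])
    have "continuous_on ({0..1} \<times> cbox 0 \<theta>) (\<lambda>p. E p (1,0))"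
      by (rule continuous_on_subset[OF cont_tht]) auto
    then show "continuous_on ({0..1} \<times> cbox 0 \<theta>) (\<lambda>(x,u). ctht x u)"
      by (simp add: ctht_def case_prod_unfold)
  qed (use t in auto)
  have Lb2: "((\<lambda>s. c s \<theta> - c s 0) has_vector_derivative integral {0..\<theta>} (\<lambda>u. ctht t u)) (at t within {0..1})"
  proof (rule has_vector_derivative_transform_within[OF Lb[unfolded interval_cbox[symmetric]] zero_less_one t])
    fix s :: real assume "s \<in> {0..1}"
    then show "integral {0..\<theta>} (\<lambda>u. cth s u) = c s \<theta> - c s 0" by (rule Phi)
  qed
  have Lb3: "((\<lambda>s. c s \<theta> - c s 0) has_vector_derivative ct t \<theta> - ct t 0) (at t within {0..1})"
    by (rule has_vector_derivative_diff[OF F2[OF t] F2[OF t]])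
  have a: "vector_derivative (\<lambda>s. c s \<theta> - c s 0) (at t within {0..1}) = integral {0..\<theta>} (\<lambda>u. ctht t u)"
    by (rule vector_derivative_within_closed_interval[OF _ t Lb2]) simp
  have b: "vector_derivative (\<lambda>s. c s \<theta> - c s 0) (at t within {0..1}) = ct t \<theta> - ct t 0"
    by (rule vector_derivative_within_closed_interval[OF _ t Lb3]) simp
  have "ct t \<theta> - ct t 0 = integral {0..\<theta>} (\<lambda>u. ctht t u)" using a b by simp
  then show ?thesis by (simp add: algebra_simps)
qed

lemma ct_deriv: assumes t: "t \<in> {0..1}" and th: "\<theta> \<in> {0..2*pi}"
  shows "((\<lambda>u. ct t u) has_vector_derivative ctht t \<theta>) (at \<theta> within {0..2*pi})"
proof -
  have "((\<lambda>u. integral {0..u} (\<lambda>u. ctht t u)) has_vector_derivative ctht t \<theta>) (at \<theta> within {0..2*pi})"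
    by (rule integral_has_vector_derivative[OF cont_ctht_th[OF t] th])
  note I = this
  have "((\<lambda>u. ct t 0 + integral {0..u} (\<lambda>u. ctht t u)) has_vector_derivative ctht t \<theta>) (at \<theta> within {0..2*pi})"
    using has_vector_derivative_add[OF has_vector_derivative_const I, of "ct t 0"] by simp
  then show ?thesis
  proof (rule has_vector_derivative_transform_within[OF _ zero_less_one th])
    fix u assume u: "u \<in> {0..2*pi}"
    show "ct t 0 + integral {0..u} (\<lambda>u. ctht t u) = ct t u" by (rule sym[OF ct_formula[OF t u]])
  qed
qed

lemma gam: assumes t: "t \<in> {0..1}" shows "inner (ctht t \<theta>) (cth t \<theta>) = inner (ctht t 0) (cth t 0)"
proof -
  have H: "((\<lambda>s. inner (cth s x) (cth s x)) has_vector_derivative 2 * inner (ctht t x) (cth t x)) (at t within {0..1})" for x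
    by (rule has_vector_derivative_eq_rhs[OF bounded_bilinear.has_vector_derivative[OF bounded_bilinear_inner F4[OF t, of x] F4[OF t, of x]]])
      (metis inner_commute mult_2)
  have H2: "((\<lambda>s. inner (cth s 0) (cth s 0)) has_vector_derivative 2 * inner (ctht t \<theta>) (cth t \<theta>)) (at t within {0..1})"
  proof (rule has_vector_derivative_transform_within[OF H zero_less_one t])
    fix s :: real assume s: "s \<in> {0..1}"
    show "inner (cth s \<theta>) (cth s \<theta>) = inner (cth s 0) (cth s 0)"
      using vt[OF s, of \<theta>] vt[OF s, of 0] by (simp add: power2_norm_eq_inner[symmetric])
  qed
  have "2 * inner (ctht t \<theta>) (cth t \<theta>) = 2 * inner (ctht t 0) (cth t 0)"
  proof -
    have a: "vector_derivative (\<lambda>s. inner (cth s 0) (cth s 0)) (at t within {0..1}) = 2 * inner (ctht t \<theta>) (cth t \<theta>)"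
      by (rule vector_derivative_within_closed_interval[OF _ t H2]) simp
    have b: "vector_derivative (\<lambda>s. inner (cth s 0) (cth s 0)) (at t within {0..1}) = 2 * inner (ctht t 0) (cth t 0)"
      by (rule vector_derivative_within_closed_interval[OF _ t H[of 0]]) simp
    from a b show ?thesis by simp
  qed
  then show ?thesis by simp
qed

lemma perp: assumes t: "t \<in> {0..1}" shows "inner (cthth t \<theta>) (cth t \<theta>) = 0"
proof -
  have H: "((\<lambda>s. inner (cth t s) (cth t s)) has_vector_derivative 2 * inner (cthth t \<theta>) (cth t \<theta>)) (at \<theta>)"
    by (rule has_vector_derivative_eq_rhs[OF bounded_bilinear.has_vector_derivative[OF bounded_bilinear_inner F3[OF t, of \<theta>] F3[OF t, of \<theta>]]])
      (metis inner_commute mult_2)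
  have e: "(\<lambda>s. inner (cth t s) (cth t s)) = (\<lambda>s. (v t)\<^sup>2)"
    by (rule ext) (simp add: power2_norm_eq_inner[symmetric] vt[OF t])
  have H': "((\<lambda>s. (v t)\<^sup>2) has_vector_derivative 2 * inner (cthth t \<theta>) (cth t \<theta>)) (at \<theta>)"
    using H unfolding e .
  have "2 * inner (cthth t \<theta>) (cth t \<theta>) = 0"
    by (rule vector_derivative_unique_at[OF H' has_vector_derivative_const])
  then show ?thesis by simp
qed

lemma ident: assumes t: "t \<in> {0..1}" shows "inner (ct t \<theta>) (cthth t \<theta>) = kap t \<theta> * v t * w t \<theta>"
proof -
  have u: "cth t \<theta> \<noteq> 0" using vpos[OF t] vt[OF t, of \<theta>] by auto
  show ?thesis
    unfolding curv[OF t] w_def vt[OF t, of \<theta>, symmetric]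
    by (rule cplx_ident[OF perp[OF t] u])
qed

lemma cth_per: assumes t: "t \<in> {0..1}" shows "cth t (2*pi) = cth t 0"
proof -
  have s: "((\<lambda>s. s + 2*pi) has_vector_derivative 1) (at 0)"
    using has_vector_derivative_add[OF has_vector_derivative_id has_vector_derivative_const, of "2*pi" "at 0"] by simp
  have "((\<lambda>s. c t s) \<circ> (\<lambda>s. s + 2*pi) has_vector_derivative (1 *\<^sub>R cth t (2*pi))) (at 0)"
    using vector_diff_chain_at[OF s, of "\<lambda>s. c t s" "cth t (2*pi)"] F1[OF t, of "2*pi"] by simp
  moreover have "(\<lambda>s. c t s) \<circ> (\<lambda>s. s + 2*pi) = (\<lambda>s. c t s)"
    by (rule ext) (simp add: per[OF t])
  ultimately have "((\<lambda>s. c t s) has_vector_derivative cth t (2*pi)) (at 0)" by simp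
  then show ?thesis by (rule vector_derivative_unique_at[OF _ F1[OF t, of 0]])
qed

lemma ct_per: assumes t: "t \<in> {0..1}" shows "ct t (2*pi) = ct t 0"
proof -
  have "((\<lambda>s. c s 0) has_vector_derivative ct t (2*pi)) (at t within {0..1})"
  proof (rule has_vector_derivative_transform_within[OF F2[OF t] zero_less_one t])
    fix s :: real assume s: "s \<in> {0..1}"
    show "c s (2*pi) = c s 0" using per[OF s, of 0] by simp
  qed
  note X = this
  have a: "vector_derivative (\<lambda>s. c s 0) (at t within {0..1}) = ct t (2*pi)"
    by (rule vector_derivative_within_closed_interval[OF _ t X]) simp
  have b: "vector_derivative (\<lambda>s. c s 0) (at t within {0..1}) = ct t 0"
    by (rule vector_derivative_within_closed_interval[OF _ t F2[OF t]]) simp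
  from a b show ?thesis by simp
qed

end

context cpath begin

definition "gm t = inner (ctht t 0) (cth t 0)"
definition "II t x = integral {0..x} (\<lambda>u. kap t u * w t u)"

lemma beta_der: assumes t: "t \<in> {0..1}" and x: "x \<in> {0..2*pi}"
  shows "((\<lambda>u. inner (ct t u) (cth t u)) has_vector_derivative (v t * (kap t x * w t x) + gm t)) (at x within {0..2*pi})"
  by (rule has_vector_derivative_eq_rhs[OF bounded_bilinear.has_vector_derivative[OF bounded_bilinear_inner
        ct_deriv[OF t x] has_vector_derivative_at_within[OF F3[OF t]]]])
     (simp add: ident[OF t, of x] gam[OF t, of x] gm_def algebra_simps)

lemma beta_eq: assumes t: "t \<in> {0..1}" and th: "\<theta> \<in> {0..2*pi}"
  shows "inner (ct t \<theta>) (cth t \<theta>) = v t * II t \<theta> + \<theta> * gm t"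
proof -
  have th0: "0 \<le> \<theta>" using th by auto
  have sub: "{0..\<theta>} \<subseteq> {0..2*pi}" using th by auto
  have ftc: "((\<lambda>x. v t * (kap t x * w t x) + gm t) has_integral
      (inner (ct t \<theta>) (cth t \<theta>) - inner (ct t 0) (cth t 0))) {0..\<theta>}"
  proof (rule fundamental_theorem_of_calculus[OF th0])
    fix x assume "x \<in> {0..\<theta>}"
    then have "x \<in> {0..2*pi}" using sub by auto
    then show "((\<lambda>u. inner (ct t u) (cth t u)) has_vector_derivative (v t * (kap t x * w t x) + gm t)) (at x within {0..\<theta>})"
      by (rule has_vector_derivative_within_subset[OF beta_der[OF t] sub])
  qed
  have int: "((\<lambda>x. kap t x * w t x) has_integral II t \<theta>) {0..\<theta>}"
    unfolding II_def
    by (rule integrable_integral, rule integrable_continuous_interval)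
       (intro continuous_intros cont_kap[OF t] cont_w[OF t])
  have cst: "((\<lambda>x. gm t) has_integral \<theta> * gm t) {0..\<theta>}"
    using has_integral_const_real[of "gm t" 0 \<theta>] th0 by simp
  have "((\<lambda>x. v t * (kap t x * w t x) + gm t) has_integral (v t * II t \<theta> + \<theta> * gm t)) {0..\<theta>}"
    by (rule has_integral_add[OF has_integral_mult_right[OF int] cst])
  then have "inner (ct t \<theta>) (cth t \<theta>) - inner (ct t 0) (cth t 0) = v t * II t \<theta> + \<theta> * gm t"
    using has_integral_unique[OF ftc] th0 by simp
  moreover have "inner (ct t 0) (cth t 0) = 0"
    using normal_at0[OF t] by (simp add: dt[OF t] dth[OF t])
  ultimately show ?thesis by simp
qed

lemma II_bound: assumes t: "t \<in> {0..1}" and th: "\<theta> \<in> {0..2*pi}"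
  shows "\<bar>II t \<theta>\<bar> \<le> K t"
proof -
  have sub: "{0..\<theta>} \<subseteq> {0..2*pi}" using th by auto
  have c1: "continuous_on {0..2*pi} (\<lambda>x. kap t x * w t x)"
    by (intro continuous_intros cont_kap[OF t] cont_w[OF t])
  have c2: "continuous_on {0..2*pi} (\<lambda>x. \<bar>kap t x * w t x\<bar>)"
    by (intro continuous_intros cont_kap[OF t] cont_w[OF t])
  have "norm (II t \<theta>) \<le> integral {0..\<theta>} (\<lambda>x. \<bar>kap t x * w t x\<bar>)"
    unfolding II_def
  proof (rule integral_norm_bound_integral)
    show "(\<lambda>x. kap t x * w t x) integrable_on {0..\<theta>}"
      by (rule integrable_continuous_interval, rule continuous_on_subset[OF c1 sub])
    show "(\<lambda>x. \<bar>kap t x * w t x\<bar>) integrable_on {0..\<theta>}"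
      by (rule integrable_continuous_interval, rule continuous_on_subset[OF c2 sub])
  qed simp
  also have "\<dots> \<le> K t"
    unfolding K_def
  proof (rule integral_subset_le[OF sub])
    show "(\<lambda>x. \<bar>kap t x * w t x\<bar>) integrable_on {0..\<theta>}"
      by (rule integrable_continuous_interval, rule continuous_on_subset[OF c2 sub])
    show "(\<lambda>x. \<bar>kap t x * w t x\<bar>) integrable_on {0..2*pi}"
      by (rule integrable_continuous_interval, rule c2)
  qed simp
  finally show ?thesis by simp
qed

lemma gm_eq: assumes t: "t \<in> {0..1}" shows "v t * II t (2*pi) + 2*pi * gm t = 0"
proof -
  have "inner (ct t (2*pi)) (cth t (2*pi)) = inner (ct t 0) (cth t 0)"
    by (simp add: ct_per[OF t] cth_per[OF t])
  moreover have "inner (ct t 0) (cth t 0) = 0"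
    using normal_at0[OF t] by (simp add: dt[OF t] dth[OF t])
  ultimately show ?thesis using beta_eq[OF t, of "2*pi"] by simp
qed

lemma gm_bound: assumes t: "t \<in> {0..1}" shows "\<bar>gm t\<bar> \<le> v t * K t / (2*pi)"
proof -
  have "gm t = - (v t * II t (2*pi)) / (2*pi)" using gm_eq[OF t] by (simp add: field_simps)
  then have "\<bar>gm t\<bar> = v t * \<bar>II t (2*pi)\<bar> / (2*pi)" using vpos[OF t] by (simp add: abs_mult)
  also have "\<dots> \<le> v t * K t / (2*pi)"
    using II_bound[OF t, of "2*pi"] vpos[OF t] by (intro divide_right_mono mult_left_mono) auto
  finally show ?thesis .
qed

lemma beta_bound: assumes t: "t \<in> {0..1}" and th: "\<theta> \<in> {0..2*pi}"
  shows "\<bar>inner (ct t \<theta>) (cth t \<theta>)\<bar> \<le> 2 * v t * K t"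
proof -
  have th0: "0 \<le> \<theta>" "\<theta> \<le> 2*pi" using th by auto
  have vp: "0 < v t" by (rule vpos[OF t])
  have Kn: "0 \<le> K t" by (rule K_nonneg[OF t])
  have a: "\<bar>v t * II t \<theta>\<bar> \<le> v t * K t"
    using II_bound[OF t th] vp by (simp add: abs_mult)
  have "\<bar>\<theta> * gm t\<bar> = \<theta> * \<bar>gm t\<bar>" using th0 by (simp add: abs_mult)
  also have "\<dots> \<le> (2*pi) * (v t * K t / (2*pi))"
    using gm_bound[OF t] th0 by (intro mult_mono) auto
  also have "\<dots> = v t * K t" by simp
  finally have b: "\<bar>\<theta> * gm t\<bar> \<le> v t * K t" .
  show ?thesis unfolding beta_eq[OF t th] using a b by linarith
qed

lemma ct_norm: assumes t: "t \<in> {0..1}" and th: "\<theta> \<in> {0..2*pi}"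
  shows "norm (ct t \<theta>) \<le> 2 * K t + \<bar>w t \<theta>\<bar> / v t"
proof -
  have vp: "0 < v t" by (rule vpos[OF t])
  have "norm (ct t \<theta>) * v t \<le> 2 * v t * K t + \<bar>w t \<theta>\<bar>"
    using cplx_norm_split[of "ct t \<theta>" "cth t \<theta>"] beta_bound[OF t th]
    by (simp add: vt[OF t] w_def)
  then have "norm (ct t \<theta>) \<le> (2 * v t * K t + \<bar>w t \<theta>\<bar>) / v t"
    using vp by (simp add: field_simps)
  also have "\<dots> = 2 * K t + \<bar>w t \<theta>\<bar> / v t" using vp by (simp add: field_simps)
  finally show ?thesis .
qed

lemma win_bound: assumes t: "t \<in> {0..1}" and a0: "0 \<le> \<alpha>" and ad: "\<alpha> + \<delta> \<le> 2*pi" and d: "0 < \<delta>"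
  shows "integral {\<alpha>..\<alpha>+\<delta>} (\<lambda>\<theta>. norm (ct t \<theta>)) \<le> \<delta> * (2 * K t) + L * sqrt (\<delta> / v t)"
proof -
  have vp: "0 < v t" by (rule vpos[OF t])
  have sub: "{\<alpha>..\<alpha>+\<delta>} \<subseteq> {0..2*pi}" using a0 ad by auto
  have cw: "continuous_on {\<alpha>..\<alpha>+\<delta>} (\<lambda>\<theta>. w t \<theta>)" by (rule cont_w[OF t])
  have ws: "integral {\<alpha>..\<alpha>+\<delta>} (\<lambda>\<theta>. (w t \<theta>)\<^sup>2) \<le> v t * L\<^sup>2"
  proof -
    have "integral {\<alpha>..\<alpha>+\<delta>} (\<lambda>\<theta>. (w t \<theta>)\<^sup>2) \<le> integral {0..2*pi} (\<lambda>\<theta>. (w t \<theta>)\<^sup>2)"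
      by (rule integral_subset_le[OF sub])
         (auto intro!: integrable_continuous_interval continuous_intros cont_w[OF t])
    then show ?thesis using en_w[OF t] by linarith
  qed
  have cs: "integral {\<alpha>..\<alpha>+\<delta>} (\<lambda>\<theta>. \<bar>w t \<theta> * 1\<bar>) \<le> sqrt (v t * L\<^sup>2 * \<delta>)"
  proof (rule int_cs[OF cw continuous_on_const ws])
    show "integral {\<alpha>..\<alpha>+\<delta>} (\<lambda>x. (1::real)\<^sup>2) \<le> \<delta>" using d by simp
    show "0 < v t * L\<^sup>2" using vp L_pos by simp
  qed (use d in simp)
  have "integral {\<alpha>..\<alpha>+\<delta>} (\<lambda>\<theta>. norm (ct t \<theta>)) \<le> integral {\<alpha>..\<alpha>+\<delta>} (\<lambda>\<theta>. 2 * K t + \<bar>w t \<theta>\<bar> / v t)"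
  proof (rule integral_le)
    show "(\<lambda>\<theta>. norm (ct t \<theta>)) integrable_on {\<alpha>..\<alpha>+\<delta>}"
      by (rule integrable_continuous_interval) (intro continuous_intros cont_ct_th[OF t])
    have "continuous_on {\<alpha>..\<alpha>+\<delta>} (\<lambda>\<theta>. 2 * K t + \<bar>w t \<theta>\<bar> / v t)"
      by (intro continuous_intros cont_w[OF t]) (use vp in auto)
    then show "(\<lambda>\<theta>. 2 * K t + \<bar>w t \<theta>\<bar> / v t) integrable_on {\<alpha>..\<alpha>+\<delta>}"
      by (rule integrable_continuous_interval)
    fix x assume "x \<in> {\<alpha>..\<alpha>+\<delta>}"
    then have "x \<in> {0..2*pi}" using sub by auto
    then show "norm (ct t x) \<le> 2 * K t + \<bar>w t x\<bar> / v t" by (rule ct_norm[OF t])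
  qed
  also have "integral {\<alpha>..\<alpha>+\<delta>} (\<lambda>\<theta>. 2 * K t + \<bar>w t \<theta>\<bar> / v t)
      = \<delta> * (2 * K t) + integral {\<alpha>..\<alpha>+\<delta>} (\<lambda>\<theta>. \<bar>w t \<theta>\<bar>) / v t"
  proof -
    have i: "((\<lambda>\<theta>. \<bar>w t \<theta>\<bar>) has_integral integral {\<alpha>..\<alpha>+\<delta>} (\<lambda>\<theta>. \<bar>w t \<theta>\<bar>)) {\<alpha>..\<alpha>+\<delta>}"
      by (rule integrable_integral, rule integrable_continuous_interval) (intro continuous_intros cont_w[OF t])
    have cst: "((\<lambda>x. 2 * K t) has_integral \<delta> * (2 * K t)) {\<alpha>..\<alpha>+\<delta>}"
      using has_integral_const_real[of "2 * K t" \<alpha> "\<alpha>+\<delta>"] d by simp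
    have "((\<lambda>\<theta>. 2 * K t + \<bar>w t \<theta>\<bar> / v t) has_integral (\<delta> * (2 * K t) + integral {\<alpha>..\<alpha>+\<delta>} (\<lambda>\<theta>. \<bar>w t \<theta>\<bar>) / v t)) {\<alpha>..\<alpha>+\<delta>}"
      by (rule has_integral_add[OF cst has_integral_divide[OF i]])
    then show ?thesis using d by (simp add: integral_unique)
  qed
  also have "integral {\<alpha>..\<alpha>+\<delta>} (\<lambda>\<theta>. \<bar>w t \<theta>\<bar>) / v t \<le> sqrt (v t * L\<^sup>2 * \<delta>) / v t"
    using cs vp by (intro divide_right_mono) auto
  also have "sqrt (v t * L\<^sup>2 * \<delta>) / v t = L * sqrt (\<delta> / v t)"
  proof -
    have b: "sqrt (v t) > 0" using vp by simp
    have "sqrt (v t * L\<^sup>2 * \<delta>) / v t = L * (sqrt (v t) * sqrt \<delta>) / (sqrt (v t) * sqrt (v t))"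
      using L_pos vp by (simp add: real_sqrt_mult)
    also have "\<dots> = L * (sqrt \<delta> / sqrt (v t))" using b by (simp add: field_simps)
    also have "\<dots> = L * sqrt (\<delta> / v t)" by (simp add: real_sqrt_divide)
    finally show ?thesis .
  qed
  finally show ?thesis by simp
qed

end

context cpath begin

lemma Hder: assumes t: "t \<in> {0..1}"
  shows "((\<lambda>s. inner (cth s 0) (cth s 0)) has_real_derivative 2 * gm t) (at t within {0..1})"
  unfolding has_real_derivative_iff_has_vector_derivative gm_def
  by (rule has_vector_derivative_eq_rhs[OF bounded_bilinear.has_vector_derivative[OF bounded_bilinear_inner F4[OF t, of 0] F4[OF t, of 0]]])
     (metis inner_commute mult_2)

lemma H_eq: assumes t: "t \<in> {0..1}" shows "sqrt (inner (cth t 0) (cth t 0)) = v t"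
  using vt[OF t, of 0] by (simp add: norm_eq_sqrt_inner)

lemma rder: assumes t: "t \<in> {0..1}"
  shows "((\<lambda>s. sqrt (sqrt (inner (cth s 0) (cth s 0)))) has_real_derivative gm t / (2 * v t * sqrt (v t))) (at t within {0..1})"
proof -
  have vp: "0 < v t" by (rule vpos[OF t])
  have "cth t 0 \<noteq> 0" using vt[OF t, of 0] vp by auto
  then have Hp: "0 < inner (cth t 0) (cth t 0)" by (simp add: inner_gt_zero_iff)
  have d1: "((\<lambda>s. sqrt (inner (cth s 0) (cth s 0))) has_real_derivative (inverse (v t) / 2) * (2 * gm t)) (at t within {0..1})"
    using DERIV_chain'[OF Hder[OF t] DERIV_real_sqrt[OF Hp]] by (simp add: H_eq[OF t])
  have d2: "((\<lambda>s. sqrt (sqrt (inner (cth s 0) (cth s 0)))) has_real_derivative (inverse (sqrt (v t)) / 2) * ((inverse (v t) / 2) * (2 * gm t))) (at t within {0..1})"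
    using DERIV_chain'[OF d1 DERIV_real_sqrt[of "sqrt (inner (cth t 0) (cth t 0))"]] vp by (simp add: H_eq[OF t])
  show ?thesis
    by (rule DERIV_cong[OF d2]) (use vp in \<open>simp add: field_simps\<close>)
qed

lemma rder_bound: assumes t: "t \<in> {0..1}"
  shows "\<bar>gm t / (2 * v t * sqrt (v t))\<bar> \<le> L / (4 * sqrt A)"
proof -
  have vp: "0 < v t" by (rule vpos[OF t])
  have sv: "0 < sqrt (v t)" using vp by simp
  have sA: "0 < sqrt A" using A_pos by simp
  have Kb: "K t \<le> L * sqrt (2*pi) * sqrt (v t) / sqrt A"
  proof -
    have "sqrt (v t * L\<^sup>2 / A * (2*pi)) = L * sqrt (2*pi) * sqrt (v t) / sqrt A"
      using L_pos A_pos vp by (simp add: real_sqrt_mult real_sqrt_divide)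
    then show ?thesis using K_bound[OF t] by simp
  qed
  have "\<bar>gm t / (2 * v t * sqrt (v t))\<bar> = \<bar>gm t\<bar> / (2 * v t * sqrt (v t))"
    using vp sv by (simp add: abs_mult)
  also have "\<dots> \<le> (v t * K t / (2*pi)) / (2 * v t * sqrt (v t))"
    using gm_bound[OF t] vp sv by (intro divide_right_mono) auto
  also have "\<dots> = K t / (4 * pi * sqrt (v t))" using vp sv by (simp add: field_simps)
  also have "\<dots> \<le> (L * sqrt (2*pi) * sqrt (v t) / sqrt A) / (4 * pi * sqrt (v t))"
    using Kb sv by (intro divide_right_mono) auto
  also have "\<dots> = L * sqrt (2*pi) / (4 * pi * sqrt A)" using sv sA by (simp add: field_simps)
  also have "\<dots> \<le> L * pi / (4 * pi * sqrt A)"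
  proof -
    have "sqrt (2*pi) \<le> pi"
    proof (rule real_le_lsqrt)
      show "0 \<le> pi" by simp
      have "2 \<le> pi" using pi_gt3 by simp
      then have "2 * pi \<le> pi * pi" by (intro mult_right_mono) auto
      then show "2 * pi \<le> pi\<^sup>2" by (simp add: power2_eq_square)
    qed
    then show ?thesis using L_pos sA by (intro divide_right_mono mult_left_mono) auto
  qed
  also have "\<dots> = L / (4 * sqrt A)" by simp
  finally show ?thesis .
qed

lemma r_lip: assumes s: "s \<in> {0..1}" and t: "t \<in> {0..1}"
  shows "\<bar>sqrt (v s) - sqrt (v t)\<bar> \<le> L / (4 * sqrt A) * \<bar>s - t\<bar>"
proof -
  have "norm ((\<lambda>s. sqrt (sqrt (inner (cth s 0) (cth s 0)))) s - (\<lambda>s. sqrt (sqrt (inner (cth s 0) (cth s 0)))) t)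
     \<le> L / (4 * sqrt A) * norm (s - t)"
  proof (rule field_differentiable_bound[where f' = "\<lambda>t. gm t / (2 * v t * sqrt (v t))"])
    show "convex {0..1::real}" by simp
    show "\<And>z. z \<in> {0..1} \<Longrightarrow> ((\<lambda>s. sqrt (sqrt (inner (cth s 0) (cth s 0)))) has_field_derivative gm z / (2 * v z * sqrt (v z))) (at z within {0..1})"
      by (rule rder)
    show "\<And>z. z \<in> {0..1} \<Longrightarrow> norm (gm z / (2 * v z * sqrt (v z))) \<le> L / (4 * sqrt A)"
      using rder_bound by simp
  qed (use s t in auto)
  then show ?thesis by (simp add: H_eq[OF s] H_eq[OF t])
qed

lemma c_lip: assumes t: "t \<in> {0..1}" shows "norm (c t x - c t y) \<le> v t * \<bar>x - y\<bar>"
proof -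
  have "norm ((\<lambda>s. c t s) x - (\<lambda>s. c t s) y) \<le> v t * norm (x - y)"
  proof (rule differentiable_bound[where f' = "\<lambda>z h. h *\<^sub>R cth t z"])
    show "convex (UNIV::real set)" by simp
    show "\<And>z. z \<in> UNIV \<Longrightarrow> ((\<lambda>s. c t s) has_derivative (\<lambda>h. h *\<^sub>R cth t z)) (at z within UNIV)"
      using F1[OF t] by (simp add: has_vector_derivative_def)
    fix z
    show "onorm (\<lambda>h. h *\<^sub>R cth t z) \<le> v t"
      using onorm_scaleR_left[OF bounded_linear_ident, of "cth t z"] by (simp add: onorm_id vt[OF t])
  qed auto
  then show ?thesis by simp
qed

lemma ftc_bound: assumes ab: "a \<le> b" "{a..b} \<subseteq> {0..1}"
  shows "norm (c b \<theta> - c a \<theta>) \<le> integral {a..b} (\<lambda>s. norm (ct s \<theta>))"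
proof -
  have hi: "((\<lambda>s. ct s \<theta>) has_integral (c b \<theta> - c a \<theta>)) {a..b}"
  proof (rule fundamental_theorem_of_calculus[OF ab(1)])
    fix x assume "x \<in> {a..b}"
    then have x: "x \<in> {0..1}" using ab by auto
    show "((\<lambda>s. c s \<theta>) has_vector_derivative ct x \<theta>) (at x within {a..b})"
      by (rule has_vector_derivative_within_subset[OF F2[OF x] ab(2)])
  qed
  have "norm (integral {a..b} (\<lambda>s. ct s \<theta>)) \<le> integral {a..b} (\<lambda>s. norm (ct s \<theta>))"
  proof (rule integral_norm_bound_integral)
    show "(\<lambda>s. ct s \<theta>) integrable_on {a..b}" using hi by blast
    have "continuous_on {a..b} (\<lambda>s. D (s,\<theta>) (1,0))" by (rule cont_line_t[OF cont_t ab(2)])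
    then show "(\<lambda>s. norm (ct s \<theta>)) integrable_on {a..b}"
      unfolding ct_def by (intro integrable_continuous_interval continuous_intros)
  qed simp
  then show ?thesis using integral_unique[OF hi] by simp
qed

lemma cont_ct_rect: assumes "U \<subseteq> {0..1}"
  shows "continuous_on (U \<times> V) (\<lambda>(s, x). norm (ct s x))"
proof -
  have "continuous_on (U \<times> V) (\<lambda>p. norm (D p (1,0)))"
    by (intro continuous_intros continuous_on_subset[OF cont_t]) (use assms in auto)
  then show ?thesis by (simp add: ct_def case_prod_unfold)
qed

end

lemma final_arith:
  fixes q al P m tau L dl v0 :: real
  assumes q: "0 < q" and al: "0 < al" and P: "0 < P" and L: "0 < L" and tau: "0 < tau" and m: "q \<le> m"
    and PP: "tau * L = P^2" and h1: "P \<le> al * q / 2" and h2: "P \<le> q^3 / 2"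
    and v0: "v0 = q^4 / (2*pi)" and dl: "dl = pi * P / q^3"
  shows "3 * v0 * dl + tau * (dl * (2 * sqrt (2 * v0 * L^2 / al^4 * (2*pi))) + L * sqrt (2 * dl / v0)) / dl
         \<le> 7 * (m^3 / al + m) * P"
proof -
  have dlp: "0 < dl" using dl q P by simp
  have v0p: "0 < v0" using v0 q by simp
  have e1: "3 * v0 * dl = 3/2 * q * P" using q by (simp add: v0 dl field_simps power_eq_if)
  have s2: "sqrt (2 * v0 * L^2 / al^4 * (2*pi)) \<le> 3/2 * (L * q^2 / al^2)"
  proof (rule real_le_lsqrt)
    show "0 \<le> 3/2 * (L * q^2 / al^2)" using L by simp
    have "2 * v0 * L^2 / al^4 * (2*pi) = 2 * (L * q^2 / al^2)^2"
      using q al by (simp add: v0 field_simps power_mult_distrib power_divide power2_eq_square power_eq_if)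
    also have "\<dots> \<le> (3/2 * (L * q^2 / al^2))^2"
    proof -
      have "(3/2 * (L * q^2 / al^2))^2 = 9/4 * (L * q^2 / al^2)^2" by (simp only: power_mult_distrib) (simp add: power2_eq_square)
      moreover have "0 \<le> (L * q^2 / al^2)^2" by simp
      ultimately show ?thesis by linarith
    qed
    finally show "2 * v0 * L^2 / al^4 * (2*pi) \<le> (3/2 * (L * q^2 / al^2))^2" .
  qed
  have s3: "sqrt (2 * dl / v0) \<le> 3/2 * dl * q / P"
  proof (rule real_le_lsqrt)
    show "0 \<le> 3/2 * dl * q / P" using dlp q P by simp
    have a: "2 * dl / v0 = (4 * P / q^3) * (pi^2 / q^4)"
      using q by (simp add: v0 dl field_simps power2_eq_square power_eq_if)
    have b: "(3/2 * dl * q / P)^2 = 9/4 * (pi^2 / q^4)"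
      using q P by (simp add: dl field_simps power2_eq_square power_eq_if)
    have c: "4 * P / q^3 \<le> 9/4"
    proof -
      have "4 * P \<le> 2 * q^3" using h2 by simp
      then have "4 * P / q^3 \<le> 2 * q^3 / q^3" using q by (intro divide_right_mono) auto
      then show ?thesis using q by simp
    qed
    show "2 * dl / v0 \<le> (3/2 * dl * q / P)^2" unfolding a b
      by (rule mult_right_mono[OF c]) simp
  qed
  have inner: "dl * (2 * sqrt (2 * v0 * L^2 / al^4 * (2*pi))) + L * sqrt (2 * dl / v0)
      \<le> dl * (2 * (3/2 * (L * q^2 / al^2))) + L * (3/2 * dl * q / P)"
    using s2 s3 dlp L by (intro add_mono mult_left_mono) auto
  have "tau * (dl * (2 * sqrt (2 * v0 * L^2 / al^4 * (2*pi))) + L * sqrt (2 * dl / v0)) / dl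
      \<le> tau * (dl * (2 * (3/2 * (L * q^2 / al^2))) + L * (3/2 * dl * q / P)) / dl"
    using inner tau dlp by (intro divide_right_mono mult_left_mono) auto
  also have "\<dots> = 3 * (tau * L) * q^2 / al^2 + 3/2 * (tau * L) * q / P"
    using dlp P by (simp add: field_simps)
  also have "\<dots> = 3 * P * (P * q^2 / al^2) + 3/2 * P * q"
    unfolding PP using P by (simp add: field_simps power2_eq_square)
  also have "\<dots> \<le> 3 * P * (q^3 / (2 * al)) + 3/2 * P * q"
  proof -
    have "P * q^2 / al^2 \<le> (al * q / 2) * q^2 / al^2"
      using h1 q al by (intro divide_right_mono mult_right_mono) auto
    also have "\<dots> = q^3 / (2 * al)" using al by (simp add: field_simps power2_eq_square power_eq_if)
    finally have "P * q^2 / al^2 \<le> q^3 / (2 * al)" .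
    then show ?thesis using P by (intro add_right_mono mult_left_mono) auto
  qed
  finally have t23: "tau * (dl * (2 * sqrt (2 * v0 * L^2 / al^4 * (2*pi))) + L * sqrt (2 * dl / v0)) / dl
      \<le> 3 * P * (q^3 / (2 * al)) + 3/2 * P * q" .
  have q3: "q^3 \<le> m^3" using m q by (intro power_mono) auto
  have "3 * v0 * dl + tau * (dl * (2 * sqrt (2 * v0 * L^2 / al^4 * (2*pi))) + L * sqrt (2 * dl / v0)) / dl
      \<le> 3/2 * q * P + (3 * P * (q^3 / (2 * al)) + 3/2 * P * q)" using e1 t23 by linarith
  also have "\<dots> = P * (3 * q) + P * (3/2 * (q^3 / al))" by (simp add: field_simps)
  also have "\<dots> \<le> P * (7 * m) + P * (7 * (m^3 / al))"
  proof -
    have A1: "3 * q \<le> 7 * m" using m q by linarith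
    have X: "q^3 / al \<le> m^3 / al" using q3 al by (intro divide_right_mono) auto
    have X0: "0 \<le> q^3 / al" using q al by simp
    have A2: "3/2 * (q^3 / al) \<le> 7 * (m^3 / al)" using X X0 by linarith
    show ?thesis using A1 A2 P by (intro add_mono mult_left_mono) auto
  qed
  also have "\<dots> = 7 * (m^3 / al + m) * P" by (simp add: field_simps)
  finally show ?thesis .
qed

context cpath begin

lemma cont_ct_rect2: assumes "U \<subseteq> {0..1}"
  shows "continuous_on (V \<times> U) (\<lambda>(x, s). norm (ct s x))"
proof -
  have cc: "continuous_on ({0..1} \<times> UNIV) (\<lambda>p. norm (D p (1,0)))" by (intro continuous_intros cont_t)
  have "continuous_on (V \<times> U) ((\<lambda>p. norm (D p (1,0))) \<circ> prod.swap)"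
    by (rule continuous_on_compose[OF continuous_on_swap continuous_on_subset[OF cc]]) (use assms in auto)
  moreover have "(\<lambda>(x, s). norm (ct s x)) = (\<lambda>p. norm (D (prod.swap p) (1,0)))"
    by (auto simp: ct_def fun_eq_iff)
  ultimately show ?thesis by (simp add: o_def)
qed

lemma window_main:
  assumes t1: "t1 \<in> {0..1}" and t2: "t2 \<in> {0..1}" and th: "\<theta> \<in> {0..2*pi}"
    and d: "0 < \<delta>" "\<delta> \<le> pi"
    and B: "\<And>s \<alpha>. s \<in> {min t1 t2..max t1 t2} \<Longrightarrow> 0 \<le> \<alpha> \<Longrightarrow> \<alpha> + \<delta> \<le> 2*pi \<Longrightarrow>
              integral {\<alpha>..\<alpha>+\<delta>} (\<lambda>x. norm (ct s x)) \<le> B"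
  shows "norm (c t1 \<theta> - c t2 \<theta>) \<le> (v t1 + v t2) * \<delta> + \<bar>t1 - t2\<bar> * B / \<delta>"
proof -
  define a where "a = min t1 t2"
  define b where "b = max t1 t2"
  have ab: "a \<le> b" "{a..b} \<subseteq> {0..1}" "b - a = \<bar>t1 - t2\<bar>" using t1 t2 by (auto simp: a_def b_def)
  define \<alpha> where "\<alpha> = (if \<theta> \<le> pi then \<theta> else \<theta> - \<delta>)"
  have al: "0 \<le> \<alpha>" "\<alpha> + \<delta> \<le> 2*pi" "\<theta> \<in> {\<alpha>..\<alpha>+\<delta>}" using th d by (auto simp: \<alpha>_def)
  define g where "g x = integral {a..b} (\<lambda>s. norm (ct s x))" for x
  let ?X = "norm (c t1 \<theta> - c t2 \<theta>)"
  let ?V = "(v t1 + v t2) * \<delta>"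
  have pt: "?X \<le> ?V + g x" if x: "x \<in> {\<alpha>..\<alpha>+\<delta>}" for x
  proof -
    have dx: "\<bar>\<theta> - x\<bar> \<le> \<delta>" "\<bar>x - \<theta>\<bar> \<le> \<delta>" using x al by auto
    have tri: "?X \<le> norm (c t1 \<theta> - c t1 x) + norm (c t1 x - c t2 x) + norm (c t2 x - c t2 \<theta>)"
      by norm
    have l1: "norm (c t1 \<theta> - c t1 x) \<le> v t1 * \<delta>"
      using c_lip[OF t1, of \<theta> x] dx vpos[OF t1] by (meson mult_left_mono less_imp_le order_trans)
    have l2: "norm (c t2 x - c t2 \<theta>) \<le> v t2 * \<delta>"
      using c_lip[OF t2, of x \<theta>] dx vpos[OF t2] by (meson mult_left_mono less_imp_le order_trans)
    have l3: "norm (c t1 x - c t2 x) \<le> g x"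
    proof -
      have "norm (c t1 x - c t2 x) = norm (c b x - c a x)"
        by (cases "t1 \<le> t2") (auto simp: a_def b_def norm_minus_commute)
      also have "\<dots> \<le> g x" unfolding g_def by (rule ftc_bound[OF ab(1,2)])
      finally show ?thesis .
    qed
    show ?thesis using tri l1 l2 l3 by (simp add: algebra_simps)
  qed
  have cg: "continuous_on {\<alpha>..\<alpha>+\<delta>} g"
  proof -
    have "continuous_on {\<alpha>..\<alpha>+\<delta>} (\<lambda>x. integral (cbox a b) (\<lambda>s. norm (ct s x)))"
      by (rule integral_continuous_on_param) (use cont_ct_rect2[OF ab(2), of "{\<alpha>..\<alpha>+\<delta>}"] in \<open>simp\<close>)
    then show ?thesis by (simp add: g_def[abs_def])
  qed
  have int1: "integral {\<alpha>..\<alpha>+\<delta>} (\<lambda>x. ?X) \<le> integral {\<alpha>..\<alpha>+\<delta>} (\<lambda>x. ?V + g x)"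
  proof (rule integral_le)
    show "(\<lambda>x. ?X) integrable_on {\<alpha>..\<alpha>+\<delta>}" by (rule integrable_continuous_interval) (rule continuous_on_const)
    show "(\<lambda>x. ?V + g x) integrable_on {\<alpha>..\<alpha>+\<delta>}"
      by (rule integrable_continuous_interval) (intro continuous_intros cg)
  qed (rule pt)
  have gi: "(g has_integral integral {\<alpha>..\<alpha>+\<delta>} g) {\<alpha>..\<alpha>+\<delta>}"
    by (rule integrable_integral, rule integrable_continuous_interval, rule cg)
  have cst1: "((\<lambda>x. ?X) has_integral \<delta> * ?X) {\<alpha>..\<alpha>+\<delta>}"
    using has_integral_const_real[of ?X \<alpha> "\<alpha>+\<delta>"] d by simp
  have cst2: "((\<lambda>x. ?V) has_integral \<delta> * ?V) {\<alpha>..\<alpha>+\<delta>}"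
    using has_integral_const_real[of ?V \<alpha> "\<alpha>+\<delta>"] d by simp
  have e1: "integral {\<alpha>..\<alpha>+\<delta>} (\<lambda>x. ?X) = \<delta> * ?X" by (rule integral_unique[OF cst1])
  have e2: "integral {\<alpha>..\<alpha>+\<delta>} (\<lambda>x. ?V + g x) = \<delta> * ?V + integral {\<alpha>..\<alpha>+\<delta>} g"
    by (rule integral_unique[OF has_integral_add[OF cst2 gi]])
  have cc: "continuous_on (cbox (\<alpha>, a) (\<alpha>+\<delta>, b)) (\<lambda>(x, s). norm (ct s x))"
    using cont_ct_rect2[OF ab(2), of "{\<alpha>..\<alpha>+\<delta>}"] by (simp add: cbox_Pair_eq)
  have sw: "integral {\<alpha>..\<alpha>+\<delta>} g = integral {a..b} (\<lambda>s. integral {\<alpha>..\<alpha>+\<delta>} (\<lambda>x. norm (ct s x)))"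
    using integral_swap_continuous[OF cc] by (simp add: g_def[abs_def])
  have outer: "integral {a..b} (\<lambda>s. integral {\<alpha>..\<alpha>+\<delta>} (\<lambda>x. norm (ct s x))) \<le> integral {a..b} (\<lambda>s. B)"
  proof (rule integral_le)
    have "continuous_on {a..b} (\<lambda>s. integral (cbox \<alpha> (\<alpha>+\<delta>)) (\<lambda>x. norm (ct s x)))"
      by (rule integral_continuous_on_param) (rule cont_ct_rect[OF ab(2)])
    then show "(\<lambda>s. integral {\<alpha>..\<alpha>+\<delta>} (\<lambda>x. norm (ct s x))) integrable_on {a..b}"
      by (intro integrable_continuous_interval) simp
    show "(\<lambda>s. B) integrable_on {a..b}" by (rule integrable_continuous_interval) (rule continuous_on_const)
    fix s assume "s \<in> {a..b}"
    then show "integral {\<alpha>..\<alpha>+\<delta>} (\<lambda>x. norm (ct s x)) \<le> B"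
      by (intro B) (use al in \<open>auto simp: a_def b_def\<close>)
  qed
  have "integral {a..b} (\<lambda>s. B) = \<bar>t1 - t2\<bar> * B" using ab by simp
  then have "\<delta> * ?X \<le> \<delta> * ?V + \<bar>t1 - t2\<bar> * B" using int1 e1 e2 sw outer by linarith
  then have "?X \<le> (\<delta> * ?V + \<bar>t1 - t2\<bar> * B) / \<delta>" using d by (simp add: field_simps)
  also have "\<dots> = ?V + \<bar>t1 - t2\<bar> * B / \<delta>" using d by (simp add: field_simps)
  finally show ?thesis .
qed

end

lemma powq: assumes "0 < (x::real)" shows "(x powr (1/4))^n = x powr (real n / 4)"
proof -
  have "(x powr (1/4))^n = (x powr (1/4)) powr (real n)" using assms by (simp add: powr_realpow)
  also have "\<dots> = x powr (real n / 4)" by (simp add: powr_powr)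
  finally show ?thesis .
qed

lemma pow4: "0 < (x::real) \<Longrightarrow> (x powr (1/4))^4 = x" using powq[of x 4] by simp
lemma pow6: "0 < (x::real) \<Longrightarrow> (x powr (1/4))^6 = x powr (3/2)" using powq[of x 6] by simp
lemma pow3: "0 < (x::real) \<Longrightarrow> (x powr (1/4))^3 = x powr (3/4)" using powq[of x 3] by simp

context cpath begin

lemma main_close:
  assumes t1: "t1 \<in> {0..1}" and t2: "t2 \<in> {0..1}" and th: "\<theta> \<in> {0..2*pi}"
    and lm0: "0 \<le> lm" and lm: "\<And>t. t \<in> {0..1} \<Longrightarrow> lm \<le> 2*pi* v t"
    and lM: "\<And>t. t \<in> {0..1} \<Longrightarrow> 2*pi* v t \<le> lM"
    and c1: "\<bar>t1 - t2\<bar> * L \<le> sqrt (A * lm) / 4" and c2: "\<bar>t1 - t2\<bar> * L \<le> lm powr (3/2) / 8"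
  shows "norm (c t1 \<theta> - c t2 \<theta>) \<le> 7 * (lM powr (3/4) * A powr (-1/4) + lM powr (1/4)) * sqrt (L * \<bar>t1 - t2\<bar>)"
proof (cases "t1 = t2")
  case True
  then show ?thesis by simp
next
  case False
  define \<tau> where "\<tau> = \<bar>t1 - t2\<bar>"
  have \<tau>p: "0 < \<tau>" using False by (simp add: \<tau>_def)
  define v0 where "v0 = v t1"
  have v0p: "0 < v0" using vpos[OF t1] by (simp add: v0_def)
  define l0 where "l0 = 2*pi* v0"
  have l0p: "0 < l0" using v0p by (simp add: l0_def)
  have lml0: "lm \<le> l0" using lm[OF t1] by (simp add: l0_def v0_def)
  have l0lM: "l0 \<le> lM" using lM[OF t1] by (simp add: l0_def v0_def)
  have sA: "0 < sqrt A" using A_pos by simp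
  have cmp: "v0/2 \<le> v s \<and> v s \<le> 2* v0" if s: "s \<in> {min t1 t2..max t1 t2}" for s
  proof -
    have s01: "s \<in> {0..1}" using s t1 t2 by auto
    have ds: "\<bar>s - t1\<bar> \<le> \<tau>" using s by (auto simp: \<tau>_def)
    have "\<bar>sqrt (v s) - sqrt v0\<bar> \<le> L / (4 * sqrt A) * \<bar>s - t1\<bar>" using r_lip[OF s01 t1] by (simp add: v0_def)
    also have "\<dots> \<le> L / (4 * sqrt A) * \<tau>" using ds L_pos sA by (intro mult_left_mono) auto
    also have "\<dots> = (\<tau> * L) / (4 * sqrt A)" by simp
    also have "\<dots> \<le> (sqrt (A*lm) / 4) / (4 * sqrt A)" using c1 sA by (intro divide_right_mono) (auto simp: \<tau>_def)
    also have "\<dots> = sqrt lm / 16" using sA by (simp add: real_sqrt_mult field_simps)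
    also have "\<dots> \<le> sqrt l0 / 16" using lml0 by simp
    also have "sqrt l0 = sqrt (2*pi) * sqrt v0" by (simp add: l0_def real_sqrt_mult)
    also have "sqrt (2*pi) * sqrt v0 / 16 \<le> (16/5) * sqrt v0 / 16"
    proof -
      have "sqrt (2*pi) \<le> 16/5"
      proof (rule real_le_lsqrt)
        show "2*pi \<le> (16/5)\<^sup>2" using pi_less_4 by (simp add: power2_eq_square)
      qed simp
      then show ?thesis using v0p by (intro divide_right_mono mult_right_mono) auto
    qed
    finally have d: "\<bar>sqrt (v s) - sqrt v0\<bar> \<le> sqrt v0 / 5" by simp
    have y: "0 < sqrt v0" using v0p by simp
    have x0: "0 \<le> sqrt (v s)" using vpos[OF s01] by simp
    have lo: "4/5 * sqrt v0 \<le> sqrt (v s)" using d by linarith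
    have hi: "sqrt (v s) \<le> 6/5 * sqrt v0" using d by linarith
    have vs: "v s = (sqrt (v s))^2" using vpos[OF s01] by simp
    have vv: "v0 = (sqrt v0)^2" using v0p by simp
    have "(4/5 * sqrt v0)^2 \<le> (sqrt (v s))^2" using lo y by (intro power_mono) auto
    moreover have "(sqrt (v s))^2 \<le> (6/5 * sqrt v0)^2" using hi x0 by (intro power_mono) auto
    moreover have "(4/5 * sqrt v0)^2 = 16/25 * (sqrt v0)^2" by (simp add: power_mult_distrib power2_eq_square)
    moreover have "(6/5 * sqrt v0)^2 = 36/25 * (sqrt v0)^2" by (simp add: power_mult_distrib power2_eq_square)
    moreover have "0 \<le> (sqrt v0)^2" by simp
    ultimately show ?thesis using vs vv by linarith
  qed
  define q where "q = l0 powr (1/4)"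
  define al where "al = A powr (1/4)"
  define m where "m = lM powr (1/4)"
  define P where "P = sqrt (L * \<tau>)"
  define dl where "dl = pi * P / q^3"
  have lMp: "0 < lM" using l0p l0lM by linarith
  have qp: "0 < q" using l0p by (simp add: q_def)
  have alp: "0 < al" using A_pos by (simp add: al_def)
  have Pp: "0 < P" using L_pos \<tau>p by (simp add: P_def)
  have PP: "\<tau> * L = P^2" using L_pos \<tau>p by (simp add: P_def)
  have q4: "q^4 = l0" using pow4[OF l0p] by (simp add: q_def)
  have Aal: "A = al^4" using pow4[OF A_pos] by (simp add: al_def)
  have mq: "q \<le> m" unfolding q_def m_def using l0p l0lM by (intro powr_mono2) auto
  have v0q: "v0 = q^4 / (2*pi)" using q4 by (simp add: l0_def)
  have h2: "P \<le> q^3 / 2"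
  proof (rule power2_le_imp_le)
    have "P^2 \<le> lm powr (3/2) / 8" using c2 PP by (simp add: \<tau>_def)
    also have "\<dots> \<le> l0 powr (3/2) / 8" using lm0 lml0 by (intro divide_right_mono powr_mono2) auto
    also have "l0 powr (3/2) = q^6" using pow6[OF l0p] by (simp add: q_def)
    also have "q^6 / 8 \<le> (q^3/2)^2" using qp by (simp add: power2_eq_square power_eq_if)
    finally show "P^2 \<le> (q^3/2)^2" .
  qed (use qp in simp)
  have h1: "P \<le> al * q / 2"
  proof (rule power2_le_imp_le)
    have "P^2 \<le> sqrt (A * lm) / 4" using c1 PP by (simp add: \<tau>_def)
    also have "\<dots> \<le> sqrt (A * l0) / 4" using lml0 A_pos by (intro divide_right_mono) auto
    also have "sqrt (A * l0) = al^2 * q^2"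
    proof -
      have e: "A * l0 = (al^2 * q^2)^2" unfolding Aal q4[symmetric] by algebra
      show ?thesis unfolding e using alp qp by simp
    qed
    also have "al^2 * q^2 / 4 = (al * q / 2)^2" by (simp add: power_mult_distrib power2_eq_square)
    finally show "P^2 \<le> (al * q / 2)^2" .
  qed (use qp alp in simp)
  have dlp: "0 < dl" using Pp qp by (simp add: dl_def)
  have dlpi: "dl \<le> pi"
  proof -
    have "dl \<le> pi * (q^3/2) / q^3" unfolding dl_def using h2 qp by (intro divide_right_mono mult_left_mono) auto
    also have "\<dots> = pi / 2" using qp by simp
    finally show ?thesis using dlp by simp
  qed
  define B where "B = dl * (2 * sqrt (2 * v0 * L^2 / A * (2*pi))) + L * sqrt (2 * dl / v0)"
  have Bh: "integral {\<alpha>..\<alpha>+dl} (\<lambda>x. norm (ct s x)) \<le> B"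
    if s: "s \<in> {min t1 t2..max t1 t2}" and a0: "0 \<le> \<alpha>" and ad: "\<alpha> + dl \<le> 2*pi" for s \<alpha>
  proof -
    have s01: "s \<in> {0..1}" using s t1 t2 by auto
    have cm: "v0/2 \<le> v s" "v s \<le> 2* v0" using cmp[OF s] by auto
    have K1: "K s \<le> sqrt (2 * v0 * L^2 / A * (2*pi))"
    proof -
      have "K s \<le> sqrt (v s * L\<^sup>2 / A * (2*pi))" by (rule K_bound[OF s01])
      also have "\<dots> \<le> sqrt (2 * v0 * L^2 / A * (2*pi))"
      proof (rule real_sqrt_le_mono)
        show "v s * L\<^sup>2 / A * (2*pi) \<le> 2 * v0 * L^2 / A * (2*pi)"
          using cm A_pos by (intro mult_right_mono divide_right_mono) auto
      qed
      finally show ?thesis .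
    qed
    have S1: "sqrt (dl / v s) \<le> sqrt (2 * dl / v0)"
    proof -
      have "dl / v s \<le> dl / (v0/2)" using cm v0p dlp by (intro divide_left_mono) auto
      also have "dl / (v0/2) = 2 * dl / v0" by simp
      finally show ?thesis by (rule real_sqrt_le_mono)
    qed
    have "integral {\<alpha>..\<alpha>+dl} (\<lambda>x. norm (ct s x)) \<le> dl * (2 * K s) + L * sqrt (dl / v s)"
      by (rule win_bound[OF s01 a0 ad dlp])
    also have "\<dots> \<le> B" unfolding B_def using K1 S1 dlp L_pos by (intro add_mono mult_left_mono) auto
    finally show ?thesis .
  qed
  have W: "norm (c t1 \<theta> - c t2 \<theta>) \<le> (v t1 + v t2) * dl + \<bar>t1 - t2\<bar> * B / dl"
    by (rule window_main[OF t1 t2 th dlp dlpi Bh])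
  have vt2: "v t2 \<le> 2 * v0" using cmp[of t2] by auto
  have "(v t1 + v t2) * dl \<le> 3 * v0 * dl" using vt2 dlp by (simp add: v0_def)
  then have W2: "norm (c t1 \<theta> - c t2 \<theta>) \<le> 3 * v0 * dl + \<tau> * B / dl" using W by (simp add: \<tau>_def)
  have F: "3 * v0 * dl + \<tau> * (dl * (2 * sqrt (2 * v0 * L^2 / al^4 * (2*pi))) + L * sqrt (2 * dl / v0)) / dl
         \<le> 7 * (m^3 / al + m) * P"
    by (rule final_arith[OF qp alp Pp L_pos \<tau>p mq PP h1 h2 v0q dl_def])
  have m3: "m^3 = lM powr (3/4)" unfolding m_def by (rule pow3[OF lMp])
  have ai: "A powr (-1/4) = 1 / al"
  proof -
    have "A powr (-1/4) = A powr (- (1/4))" by simp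
    also have "\<dots> = inverse (A powr (1/4))" by (rule powr_minus)
    also have "\<dots> = 1 / al" unfolding al_def by (rule inverse_eq_divide)
    finally show ?thesis .
  qed
  have R: "7 * (m^3 / al + m) * P = 7 * (lM powr (3/4) * A powr (-1/4) + lM powr (1/4)) * sqrt (L * \<bar>t1 - t2\<bar>)"
    unfolding m3 ai P_def \<tau>_def by (simp only: m_def divide_inverse mult_1_left)
  have BB: "\<tau> * B / dl = \<tau> * (dl * (2 * sqrt (2 * v0 * L^2 / al^4 * (2*pi))) + L * sqrt (2 * dl / v0)) / dl"
    unfolding B_def Aal ..
  show ?thesis using W2 F R BB by linarith
qed

end

theorem corollary3p8:
  fixes c :: "real \<Rightarrow> real \<Rightarrow> complex" and A L :: real
  assumes A_pos: "A > 0" and L_pos: "L > 0"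
    and path: "smooth_imm_path c"
    and const_speed: "\<forall>t\<in>{0..1}. \<forall>\<theta>. norm (d_theta c t \<theta>) = curve_length c t / (2 * pi)"
    and normal_at0: "\<forall>t\<in>{0..1}. inner (d_t c t 0) (d_theta c t 0) = 0"
    and energy: "\<forall>t\<in>{0..1}.
       integral {0..2 * pi} (\<lambda>\<theta>. (1 + A * (curvature c t \<theta>)\<^sup>2)
           * (inner (d_t c t \<theta>) (\<i> * d_theta c t \<theta>))\<^sup>2 / norm (d_theta c t \<theta>)) = L\<^sup>2"
    and t1: "t1 \<in> {0..1}" and t2: "t2 \<in> {0..1}"
    and th1: "\<theta>1 \<in> {0..2 * pi}" and th2: "\<theta>2 \<in> {0..2 * pi}"
    and close: "\<bar>t1 - t2\<bar> \<le> min (2 * sqrt (A * Inf (curve_length c ` {0..1})))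
                                  (Inf (curve_length c ` {0..1}) powr (3/2)) / (8 * L)"
  shows "norm (c t1 \<theta>1 - c t2 \<theta>2)
     \<le> Sup (curve_length c ` {0..1}) / (2 * pi) * \<bar>\<theta>1 - \<theta>2\<bar>
       + 7 * (Sup (curve_length c ` {0..1}) powr (3/4) * A powr (-1/4)
              + Sup (curve_length c ` {0..1}) powr (1/4)) * sqrt (L * \<bar>t1 - t2\<bar>)"
proof -
  let ?S = "{0..1::real} \<times> (UNIV::real set)"
  let ?F = "\<lambda>(t, \<theta>). c t \<theta>"
  have sm: "smooth2_on ?S ?F" and perr: "\<forall>t\<in>{0..1}. \<forall>\<theta>. c t (\<theta> + 2*pi) = c t \<theta>"
    and nzz: "\<forall>t\<in>{0..1}. \<forall>\<theta>. d_theta c t \<theta> \<noteq> 0"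
    using path unfolding smooth_imm_path_def by auto
  have C3: "Ck_on (Suc (Suc (Suc 0))) ?S ?F" using sm unfolding smooth2_on_def by blast
  have C00: "Ck_on 0 ?S ?F" using sm unfolding smooth2_on_def by blast
  then have C0: "continuous_on ?S ?F" by (simp only: Ck_on.simps(1))
  have "\<exists>D. (\<forall>x\<in>?S. (?F has_derivative D x) (at x within ?S)) \<and> Ck_on (Suc (Suc 0)) ?S (\<lambda>x. D x (1,0))
      \<and> Ck_on (Suc (Suc 0)) ?S (\<lambda>x. D x (0,1))"
    using C3 by (simp only: Ck_on.simps(2))
  then obtain D where Dd: "\<forall>x\<in>?S. (?F has_derivative D x) (at x within ?S)"
    and D1: "Ck_on (Suc (Suc 0)) ?S (\<lambda>x. D x (1,0))" and D2: "Ck_on (Suc (Suc 0)) ?S (\<lambda>x. D x (0,1))"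
    by blast
  have "\<exists>E. (\<forall>x\<in>?S. ((\<lambda>x. D x (0,1)) has_derivative E x) (at x within ?S)) \<and> Ck_on (Suc 0) ?S (\<lambda>x. E x (1,0))
      \<and> Ck_on (Suc 0) ?S (\<lambda>x. E x (0,1))"
    using D2 by (simp only: Ck_on.simps(2))
  then obtain E where Ed: "\<forall>x\<in>?S. ((\<lambda>x. D x (0,1)) has_derivative E x) (at x within ?S)"
    and E1: "Ck_on (Suc 0) ?S (\<lambda>x. E x (1,0))" and E2: "Ck_on (Suc 0) ?S (\<lambda>x. E x (0,1))"
    by blast
  have cD1: "continuous_on ?S (\<lambda>x. D x (1,0))"
    using Ck_on_Suc_imp[OF Ck_on_Suc_imp[OF D1]] by (simp only: Ck_on.simps(1))
  have cD2: "continuous_on ?S (\<lambda>x. D x (0,1))"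
    using Ck_on_Suc_imp[OF Ck_on_Suc_imp[OF D2]] by (simp only: Ck_on.simps(1))
  have cE1: "continuous_on ?S (\<lambda>x. E x (1,0))"
    using Ck_on_Suc_imp[OF E1] by (simp only: Ck_on.simps(1))
  have cE2: "continuous_on ?S (\<lambda>x. E x (0,1))"
    using Ck_on_Suc_imp[OF E2] by (simp only: Ck_on.simps(1))
  interpret cp: cpath c A L D E
    apply unfold_locales
    subgoal by (rule A_pos)
    subgoal by (rule L_pos)
    subgoal using perr by blast
    subgoal using Dd by blast
    subgoal using Ed by blast
    subgoal by (rule C0)
    subgoal by (rule cD1)
    subgoal by (rule cD2)
    subgoal by (rule cE1)
    subgoal by (rule cE2)
    subgoal using nzz by blast
    subgoal using const_speed by blast
    subgoal using normal_at0 by blast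
    subgoal using energy by blast
    done
  define lm where "lm = Inf (curve_length c ` {0..1})"
  define lM where "lM = Sup (curve_length c ` {0..1})"
  have clv: "curve_length c t = 2 * pi * cp.v t" for t by (simp add: cp.v_def)
  have cont_cl: "continuous_on {0..1} (curve_length c)"
  proof (rule continuous_on_eq)
    have "continuous_on {0..1} (\<lambda>s. D (s,0) (0,1))" by (rule cont_line_t[OF cD2]) simp
    then show "continuous_on {0..1} (\<lambda>t. 2 * pi * norm (D (t,0) (0,1)))" by (intro continuous_intros)
    fix t :: real assume t: "t \<in> {0..1}"
    show "2 * pi * norm (D (t,0) (0,1)) = curve_length c t"
      using cp.vt[OF t, of 0] by (simp add: cp.cth_def clv)
  qed
  have cpt: "compact (curve_length c ` {0..1})" by (rule compact_continuous_image[OF cont_cl compact_Icc])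
  have bdA: "bdd_above (curve_length c ` {0..1})" by (rule bounded_imp_bdd_above[OF compact_imp_bounded[OF cpt]])
  have bdB: "bdd_below (curve_length c ` {0..1})" by (rule bounded_imp_bdd_below[OF compact_imp_bounded[OF cpt]])
  have lmle: "lm \<le> 2 * pi * cp.v t" if t: "t \<in> {0..1}" for t
    unfolding lm_def clv[symmetric] by (rule cInf_lower[OF imageI[OF t] bdB])
  have lMge: "2 * pi * cp.v t \<le> lM" if t: "t \<in> {0..1}" for t
    unfolding lM_def clv[symmetric] by (rule cSup_upper[OF imageI[OF t] bdA])
  have lm0: "0 \<le> lm" unfolding lm_def
  proof (rule cInf_greatest)
    show "curve_length c ` {0..1} \<noteq> {}" by simp
    fix x assume "x \<in> curve_length c ` {0..1}"
    then obtain t where t: "t \<in> {0..1}" and x: "x = curve_length c t" by blast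
    show "0 \<le> x" using cp.vpos[OF t] by (simp add: x clv)
  qed
  define M where "M = min (2 * sqrt (A * lm)) (lm powr (3/2))"
  have cl: "\<bar>t1 - t2\<bar> \<le> M / (8 * L)" using close by (simp add: M_def lm_def)
  have tL: "\<bar>t1 - t2\<bar> * L \<le> M / 8"
  proof -
    have "\<bar>t1 - t2\<bar> * L \<le> M / (8 * L) * L" using cl L_pos by (intro mult_right_mono) auto
    also have "\<dots> = M / 8" using L_pos by simp
    finally show ?thesis .
  qed
  have M1: "M \<le> 2 * sqrt (A * lm)" by (simp add: M_def)
  have M2: "M \<le> lm powr (3/2)" by (simp add: M_def)
  have c1: "\<bar>t1 - t2\<bar> * L \<le> sqrt (A * lm) / 4" using tL M1 by linarith
  have c2: "\<bar>t1 - t2\<bar> * L \<le> lm powr (3/2) / 8" using tL M2 by linarith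
  have main: "norm (c t1 \<theta>2 - c t2 \<theta>2) \<le> 7 * (lM powr (3/4) * A powr (-1/4) + lM powr (1/4)) * sqrt (L * \<bar>t1 - t2\<bar>)"
    by (rule cp.main_close[OF t1 t2 th2 lm0 lmle lMge c1 c2])
  have lip: "norm (c t1 \<theta>1 - c t1 \<theta>2) \<le> lM / (2 * pi) * \<bar>\<theta>1 - \<theta>2\<bar>"
  proof -
    have "norm (c t1 \<theta>1 - c t1 \<theta>2) \<le> cp.v t1 * \<bar>\<theta>1 - \<theta>2\<bar>" by (rule cp.c_lip[OF t1])
    also have "\<dots> \<le> lM / (2 * pi) * \<bar>\<theta>1 - \<theta>2\<bar>"
    proof (rule mult_right_mono)
      show "cp.v t1 \<le> lM / (2 * pi)" using lMge[OF t1] by (simp add: field_simps)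
    qed simp
    finally show ?thesis .
  qed
  have tri: "norm (c t1 \<theta>1 - c t2 \<theta>2) \<le> norm (c t1 \<theta>1 - c t1 \<theta>2) + norm (c t1 \<theta>2 - c t2 \<theta>2)"
    by norm
  show ?thesis unfolding lM_def[symmetric] using tri lip main by linarith
qed

end
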